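(* Let $k\in\mathbb{N}_0$, $n=2k+1$, $a<b$, $N\ge1$ an integer, $h=(b-a)/N$, and grid points $x_j=a+jh$, $0\le j\le N$. Let $\phi\in C^k([a,b])$ with $\phi^{(k)}$ absolutely continuous (so $\phi^{(k+1)}$ is integrable). Let $P_k^+\phi$ be the function which on each cell $[x_j,x_{j+1}]$ is the polynomial of degree $\le n$ interpolating $\phi^{(\ell)}(x_j)$ and $\phi^{(\ell)}(x_{j+1})$ for $\ell=0,\dots,k$. Then $$\int_a^b(P_k^+\phi)(x)\,dx=\int_a^b\phi(x)\,dx-h^{k+1}\int_a^b E_k\Big(\frac{x-a}{h}\Big)\phi^{(k+1)}(x)\,dx,$$ where $E_k(z)=\mu_k(z\bmod 1)$ is the $1$-periodic extension of $\mu_k(x)=\frac{d^{k+1}}{dx^{k+1}}\Big[\frac{1}{(n+1)!}x^{k+1}(1-x)^{k+1}\Big]$, $x\in[0,1]$.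
   Context: $f^{(j)}$ denotes the $j$-th derivative of $f$. $P_k^+\phi$ is the piecewise cubic ($k=1$), quintic ($k=2$), etc., Hermite interpolant of $\phi$ on the uniform grid, using values and derivatives up to order $k$ at grid points. *)

theory Defs
  imports "HOL-Analysis.Analysis" "HOL-Computational_Algebra.Polynomial"
begin

definition abs_cont_on :: "real \<Rightarrow> real \<Rightarrow> (real \<Rightarrow> real) \<Rightarrow> bool" where
  "abs_cont_on a b f \<longleftrightarrow>
     (\<forall>e>0. \<exists>d>0. \<forall>(m::nat) (u::nat \<Rightarrow> real) (v::nat \<Rightarrow> real).
        (\<forall>i<m. a \<le> u i \<and> u i \<le> v i \<and> v i \<le> b) \<longrightarrow>
        (\<forall>i<m. \<forall>j<m. i \<noteq> j \<longrightarrow> v i \<le> u j \<or> v j \<le> u i) \<longrightarrow>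
        (\<Sum>i<m. v i - u i) < d \<longrightarrow>
        (\<Sum>i<m. \<bar>f (v i) - f (u i)\<bar>) < e)"

definition hermite_cell :: "nat \<Rightarrow> (nat \<Rightarrow> real \<Rightarrow> real) \<Rightarrow> real \<Rightarrow> real \<Rightarrow> real poly" where
  "hermite_cell k Df x0 x1 =
     (THE p. degree p \<le> 2*k+1 \<and>
        (\<forall>l\<le>k. poly ((pderiv ^^ l) p) x0 = Df l x0 \<and> poly ((pderiv ^^ l) p) x1 = Df l x1))"

text \<open>Index of the grid cell containing x (cells [x_j, x_{j+1}], j = 0..N-1; the
  right endpoint b is assigned to the last cell).\<close>
definition cell_index :: "real \<Rightarrow> real \<Rightarrow> nat \<Rightarrow> real \<Rightarrow> nat" where
  "cell_index a b N x = nat (min \<lfloor>(x - a) / ((b - a) / real N)\<rfloor> (int N - 1))"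

definition hermite_pw :: "nat \<Rightarrow> real \<Rightarrow> real \<Rightarrow> nat \<Rightarrow> (nat \<Rightarrow> real \<Rightarrow> real) \<Rightarrow> real \<Rightarrow> real" where
  "hermite_pw k a b N Df x =
     (let h = (b - a) / real N; j = cell_index a b N x
      in poly (hermite_cell k Df (a + real j * h) (a + real (Suc j) * h)) x)"

definition mu :: "nat \<Rightarrow> real \<Rightarrow> real" where
  "mu k x = poly ((pderiv ^^ (k+1))
       (smult (1 / fact (2*k+2)) ([:0, 1:] ^ (k+1) * [:1, -1:] ^ (k+1)))) x"

definition E :: "nat \<Rightarrow> real \<Rightarrow> real" where
  "E k z = mu k (frac z)"

end

theory Submission
  imports Defs "HOL-Computational_Algebra.Polynomial_Factorial" "HOL-Computational_Algebra.Euclidean_Algorithm" "HOL-Computational_Algebra.Field_as_Ring"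
begin

lemma funpow_pderiv_Suc: "(pderiv ^^ Suc m) p = (pderiv ^^ m) (pderiv p)"
  by (metis funpow_Suc_right comp_apply)

lemma funpow_pderiv_diff: "(pderiv ^^ m) (p - q) = (pderiv ^^ m) p - (pderiv ^^ m) (q::real poly)"
  by (induction m arbitrary: p q) (auto simp: funpow_pderiv_Suc pderiv_diff)

lemma funpow_pderiv_add: "(pderiv ^^ m) (p + q) = (pderiv ^^ m) p + (pderiv ^^ m) (q::real poly)"
  by (induction m arbitrary: p q) (auto simp: funpow_pderiv_Suc pderiv_add)

lemma funpow_pderiv_smult: "(pderiv ^^ m) (smult a p) = smult a ((pderiv ^^ m) (p::real poly))"
  by (induction m arbitrary: p) (auto simp: funpow_pderiv_Suc pderiv_smult)

lemma funpow_pderiv_vanish: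
  assumes "[:-r,1:]^n dvd (p::real poly)" "m < n"
  shows "poly ((pderiv ^^ m) p) r = 0"
  using assms
proof (induction m arbitrary: n p)
  case 0
  then obtain q where "p = [:-r,1:]^n * q" by (auto elim: dvdE)
  then show ?case using 0 by (simp add: power_0_left)
next
  case (Suc m)
  then obtain q where q: "p = [:-r,1:]^n * q" by (auto elim: dvdE)
  obtain n' where n': "n = Suc n'" using Suc by (cases n) auto
  have "pderiv p = [:-r,1:]^n' * ([:-r,1:] * pderiv q + smult (of_nat (Suc n')) q)"
    unfolding q n' lemma_order_pderiv1 by (simp add: algebra_simps)
  then have "[:-r,1:]^n' dvd pderiv p" by simp
  then show ?case using Suc.IH[of n' "pderiv p"] Suc.prems n' funpow_pderiv_Suc[of m p] by simp
qed

lemma funpow_pderiv_top: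
  assumes "degree (p::real poly) \<le> n"
  shows "(pderiv ^^ n) p = [:coeff p n * fact n:]"
  using assms
proof (induction n arbitrary: p)
  case 0
  then show ?case by (metis degree_0_id fact_0 funpow_0 le_zero_eq mult.right_neutral)
next
  case (Suc n)
  have "degree (pderiv p) \<le> n" using Suc.prems degree_pderiv[of p] by simp
  from Suc.IH[OF this] show ?case
    by (simp add: funpow_pderiv_Suc[of n p] coeff_pderiv algebra_simps del: funpow.simps)
qed

lemma funpow_pderiv_zero:
  assumes "degree (p::real poly) < n"
  shows "(pderiv ^^ n) p = 0"
  using funpow_pderiv_top[of p n] assms by (simp add: coeff_eq_0)

lemma order_from_vanish:
  assumes "(q::real poly) \<noteq> 0" "\<forall>l\<le>k. poly ((pderiv ^^ l) q) c = 0"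
  shows "k < order c q"
  using assms
proof (induction k arbitrary: q)
  case 0
  then show ?case using order_root[of q c] by auto
next
  case (Suc k)
  have q0: "poly q c = 0" using Suc.prems(2) by (metis funpow_0 zero_le)
  show ?case
  proof (cases "pderiv q = 0")
    case True
    then obtain h where "q = [:h:]" using pderiv_iszero by blast
    then show ?thesis using q0 Suc.prems(1) by simp
  next
    case False
    have "\<forall>l\<le>k. poly ((pderiv ^^ l) (pderiv q)) c = 0"
      using Suc.prems(2) by (metis Suc_le_mono funpow_pderiv_Suc)
    from Suc.IH[OF False this] order_pderiv[OF Suc.prems(1) q0] show ?thesis by simp
  qed
qed

lemma vanish_dvd:
  assumes "\<forall>l\<le>k. poly ((pderiv ^^ l) q) c = 0"
  shows "[:-c,1:]^(Suc k) dvd (q::real poly)"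
proof (cases "q = 0")
  case False
  then show ?thesis using order_from_vanish[OF False assms] order_divides[of c "Suc k" q] by simp
qed simp

lemma coprime_lin:
  assumes "(c::real) \<noteq> d"
  shows "coprime [:-c,1:] [:-d,1:]"
proof (rule coprimeI)
  fix z assume z: "z dvd [:-c,1:]" "z dvd [:-d,1:]"
  have e: "[:-c,1:] - [:-d,1:] = [:d-c:]" by simp
  have "z dvd [:d-c:]" using dvd_diff[OF z] unfolding e .
  moreover have "is_unit [:d-c:]" using assms by (intro is_unit_triv) simp
  ultimately show "is_unit z" using dvd_unit_imp_unit by blast
qed

lemma coprime_lin_pow:
  assumes "(c::real) \<noteq> d"
  shows "coprime ([:-c,1:]^m) ([:-d,1:]^n)"
  using coprime_lin[OF assms] by (auto simp: coprime_power_left_iff coprime_power_right_iff)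

lemma prod_dvd_test: "coprime a (b::real poly) \<Longrightarrow> a dvd c \<Longrightarrow> b dvd c \<Longrightarrow> a * b dvd c"
  by (rule divides_mult)

lemma taylor_exists: "\<exists>A::real poly. \<forall>l\<le>k. poly ((pderiv ^^ l) A) c = D l"
proof (induction k)
  case 0
  show ?case by (rule exI[of _ "[:D 0:]"]) simp
next
  case (Suc k)
  then obtain A where A: "\<forall>l\<le>k. poly ((pderiv ^^ l) A) c = D l" by blast
  define t where "t = (D (Suc k) - poly ((pderiv ^^ Suc k) A) c) / fact (Suc k)"
  define A' where "A' = A + smult t ([:-c,1:]^(Suc k))"
  have "poly ((pderiv ^^ l) A') c = D l" if "l \<le> Suc k" for l
  proof (cases "l \<le> k")
    case True
    have "poly ((pderiv ^^ l) ([:-c,1:]^(Suc k))) c = 0"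
      by (rule funpow_pderiv_vanish[of c "Suc k"]) (use True in auto)
    then show ?thesis using A True by (simp add: A'_def funpow_pderiv_add funpow_pderiv_smult)
  next
    case False
    then have l: "l = Suc k" using that by simp
    have "(pderiv ^^ Suc k) ([:-c,1:]^(Suc k)) = [:coeff ([:-c,1:]^(Suc k)) (Suc k) * fact (Suc k):]"
      by (rule funpow_pderiv_top) (simp add: degree_linear_power del: power_Suc)
    then have "(pderiv ^^ Suc k) ([:-c,1:]^(Suc k)) = [:fact (Suc k):]"
      using coeff_linear_power[of "-c" "Suc k"] by (simp del: power_Suc funpow.simps)
    then show ?thesis unfolding l A'_def funpow_pderiv_add funpow_pderiv_smult
      by (simp add: t_def del: funpow.simps)
  qed
  then show ?case by blast
qed

lemma hermite_unique:
  fixes p q :: "real poly"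
  assumes "c \<noteq> d" "degree p \<le> 2*k+1" "degree q \<le> 2*k+1"
    "\<forall>l\<le>k. poly ((pderiv ^^ l) p) c = poly ((pderiv ^^ l) q) c"
    "\<forall>l\<le>k. poly ((pderiv ^^ l) p) d = poly ((pderiv ^^ l) q) d"
  shows "p = q"
proof (rule ccontr)
  assume ne: "p \<noteq> q"
  define r where "r = p - q"
  have r0: "r \<noteq> 0" using ne by (simp add: r_def)
  have "[:-c,1:]^(Suc k) dvd r"
    by (rule vanish_dvd) (use assms(4) in \<open>simp add: r_def funpow_pderiv_diff\<close>)
  moreover have "[:-d,1:]^(Suc k) dvd r"
    by (rule vanish_dvd) (use assms(5) in \<open>simp add: r_def funpow_pderiv_diff\<close>)
  ultimately have "[:-c,1:]^(Suc k) * [:-d,1:]^(Suc k) dvd r"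
    using divides_mult coprime_lin_pow[OF assms(1)] by blast
  then have "degree ([:-c,1:]^(Suc k) * [:-d,1:]^(Suc k)) \<le> degree r"
    using dvd_imp_degree_le r0 by blast
  moreover have "degree ([:-c,1:]^(Suc k) * [:-d,1:]^(Suc k)) = 2*k+2"
    by (subst degree_mult_eq) (auto simp: degree_linear_power simp del: power_Suc)
  moreover have "degree r \<le> 2*k+1" unfolding r_def
    using degree_diff_le[of p "2*k+1" q] assms(2,3) by simp
  ultimately show False by simp
qed

lemma hermite_exists:
  fixes c d :: real and D :: "nat \<Rightarrow> real \<Rightarrow> real"
  assumes "c \<noteq> d"
  shows "\<exists>p. degree p \<le> 2*k+1 \<and>
     (\<forall>l\<le>k. poly ((pderiv ^^ l) p) c = D l c \<and> poly ((pderiv ^^ l) p) d = D l d)"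
proof -
  obtain A where A: "\<forall>l\<le>k. poly ((pderiv ^^ l) A) c = D l c"
    using taylor_exists[of k c "\<lambda>l. D l c"] by blast
  obtain B where B: "\<forall>l\<le>k. poly ((pderiv ^^ l) B) d = D l d"
    using taylor_exists[of k d "\<lambda>l. D l d"] by blast
  define Xc :: "real poly" where "Xc = [:-c,1:]^(Suc k)"
  define Xd :: "real poly" where "Xd = [:-d,1:]^(Suc k)"
  define u where "u = fst (bezout_coefficients Xc Xd)"
  define w where "w = snd (bezout_coefficients Xc Xd)"
  have uw: "u * Xc + w * Xd = 1"
    using bezout_coefficients_fst_snd[of Xc Xd] coprime_imp_gcd_eq_1[OF coprime_lin_pow[OF assms, of "Suc k" "Suc k"]]
    by (simp add: u_def w_def Xc_def Xd_def)
  define M where "M = Xc * Xd"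
  have degM: "degree M = 2*k+2"
    unfolding M_def Xc_def Xd_def by (subst degree_mult_eq) (auto simp: degree_linear_power simp del: power_Suc)
  then have M0: "M \<noteq> 0" by auto
  define p0 where "p0 = A * w * Xd + B * u * Xc"
  define p where "p = p0 mod M"
  have pe: "p = p0 - (p0 div M) * M" unfolding p_def using div_mult_mod_eq[of p0 M] by (simp add: algebra_simps)
  have "p - A = Xc * (B * u - A * u - (p0 div M) * Xd)"
  proof -
    have "A = A * (u * Xc + w * Xd)" using uw by simp
    then show ?thesis unfolding pe p0_def M_def by (simp add: algebra_simps)
  qed
  then have dc: "[:-c,1:]^(Suc k) dvd p - A" unfolding Xc_def by simp
  have "p - B = Xd * (A * w - B * w - (p0 div M) * Xc)"
  proof -
    have "B = B * (u * Xc + w * Xd)" using uw by simp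
    then show ?thesis unfolding pe p0_def M_def by (simp add: algebra_simps)
  qed
  then have dd: "[:-d,1:]^(Suc k) dvd p - B" unfolding Xd_def by simp
  have degp: "degree p \<le> 2*k+1"
    using degree_mod_less[OF M0, of p0] degM by (auto simp: p_def)
  have "poly ((pderiv ^^ l) p) c = D l c \<and> poly ((pderiv ^^ l) p) d = D l d" if "l \<le> k" for l
  proof -
    have "poly ((pderiv ^^ l) (p - A)) c = 0" by (rule funpow_pderiv_vanish[OF dc]) (use that in simp)
    moreover have "poly ((pderiv ^^ l) (p - B)) d = 0" by (rule funpow_pderiv_vanish[OF dd]) (use that in simp)
    ultimately show ?thesis using A B that by (simp add: funpow_pderiv_diff)
  qed
  then show ?thesis using degp by blast
qed

lemma hermite_cell_props:
  assumes "(c::real) \<noteq> d"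
  shows "degree (hermite_cell k Df c d) \<le> 2*k+1 \<and>
     (\<forall>l\<le>k. poly ((pderiv ^^ l) (hermite_cell k Df c d)) c = Df l c \<and>
              poly ((pderiv ^^ l) (hermite_cell k Df c d)) d = Df l d)"
proof -
  have "\<exists>!p. degree p \<le> 2*k+1 \<and>
     (\<forall>l\<le>k. poly ((pderiv ^^ l) p) c = Df l c \<and> poly ((pderiv ^^ l) p) d = Df l d)"
  proof (rule ex_ex1I)
    show "\<exists>p. degree p \<le> 2*k+1 \<and>
     (\<forall>l\<le>k. poly ((pderiv ^^ l) p) c = Df l c \<and> poly ((pderiv ^^ l) p) d = Df l d)"
      by (rule hermite_exists[OF assms])
  next
    fix p q :: "real poly"
    assume "degree p \<le> 2*k+1 \<and>
     (\<forall>l\<le>k. poly ((pderiv ^^ l) p) c = Df l c \<and> poly ((pderiv ^^ l) p) d = Df l d)"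
      "degree q \<le> 2*k+1 \<and>
     (\<forall>l\<le>k. poly ((pderiv ^^ l) q) c = Df l c \<and> poly ((pderiv ^^ l) q) d = Df l d)"
    then show "p = q" by (intro hermite_unique[OF assms, of p k q]) auto
  qed
  from theI'[OF this] show ?thesis unfolding hermite_cell_def .
qed

hide_const (open) Polynomial.content


lemma nonoverlap_real:
  fixes u v u' v' :: real
  assumes "u < v" "u' < v'" "{u<..<v} \<inter> {u'<..<v'} = {}"
  shows "v \<le> u' \<or> v' \<le> u"
proof (rule ccontr)
  assume "\<not> (v \<le> u' \<or> v' \<le> u)"
  then have "(max u u' + min v v')/2 \<in> {u<..<v} \<inter> {u'<..<v'}" using assms by auto
  then show False using assms(3) by blast
qed

lemma ftc_ac:
  fixes F f :: "real \<Rightarrow> real"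
  assumes cd: "c \<le> d" and ac: "abs_cont_on c d F" and S: "negligible S"
    and der: "\<And>x. x \<in> {c<..<d} \<Longrightarrow> x \<notin> S \<Longrightarrow> (F has_real_derivative f x) (at x)"
  shows "(f has_integral (F d - F c)) {c..d}"
proof -
  define E where "E = insert c (insert d S)"
  have E: "negligible E" using S by (simp add: E_def negligible_insert)
  define f0 where "f0 x = (if x \<in> E then 0 else f x)" for x
  have f0i: "(f0 has_integral (F d - F c)) (cbox c d)"
    unfolding has_integral
  proof (intro allI impI)
    fix e :: real assume e: "e > 0"
    define \<epsilon> where "\<epsilon> = e / (2 * (d - c + 1))"
    have \<epsilon>: "\<epsilon> > 0" using e cd by (simp add: \<epsilon>_def)
    have \<epsilon>2: "\<epsilon> * (d - c) < e / 2"
      using e cd by (simp add: \<epsilon>_def field_simps)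
    have "e/2 > 0" using e by simp
    from ac[unfolded abs_cont_on_def, rule_format, OF this]
    obtain \<delta> where \<delta>: "\<delta> > 0" and \<delta>P: "\<forall>(m::nat) (u::nat\<Rightarrow>real) (v::nat\<Rightarrow>real). (\<forall>i<m. c \<le> u i \<and> u i \<le> v i \<and> v i \<le> d) \<longrightarrow>
          (\<forall>i<m. \<forall>j<m. i \<noteq> j \<longrightarrow> v i \<le> u j \<or> v j \<le> u i) \<longrightarrow>
          (\<Sum>i<m. v i - u i) < \<delta> \<longrightarrow> (\<Sum>i<m. \<bar>F (v i) - F (u i)\<bar>) < e/2"
      by (elim exE conjE) (rule that)
    from E[unfolded negligible_def, rule_format, of c d, unfolded has_integral, rule_format, OF \<delta>]
    obtain \<gamma>1 where \<gamma>1: "gauge \<gamma>1" and \<gamma>1P: "\<forall>p. p tagged_division_of cbox c d \<and> \<gamma>1 fine p \<longrightarrow>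
        norm ((\<Sum>(x,K)\<in>p. content K *\<^sub>R indicat_real E x) - 0) < \<delta>"
      by (elim exE conjE) (rule that)
    have "\<forall>x. \<exists>r>0. x \<in> {c<..<d} \<and> x \<notin> S \<longrightarrow>
            (\<forall>y. norm (y - x) < r \<longrightarrow> norm (F y - F x - f x * (y - x)) \<le> \<epsilon> * norm (y - x))"
    proof
      fix x
      show "\<exists>r>0. x \<in> {c<..<d} \<and> x \<notin> S \<longrightarrow>
            (\<forall>y. norm (y - x) < r \<longrightarrow> norm (F y - F x - f x * (y - x)) \<le> \<epsilon> * norm (y - x))"
      proof (cases "x \<in> {c<..<d} \<and> x \<notin> S")
        case True
        then have "(F has_derivative (*) (f x)) (at x)"
          using der has_field_derivative_def by blast
        then show ?thesis unfolding has_derivative_at_alt using \<epsilon> by blast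
      qed (auto intro: exI[of _ 1])
    qed
    then obtain r where rr: "\<forall>x. r x > 0 \<and> (x \<in> {c<..<d} \<and> x \<notin> S \<longrightarrow>
            (\<forall>y. norm (y - x) < r x \<longrightarrow> norm (F y - F x - f x * (y - x)) \<le> \<epsilon> * norm (y - x)))"
      by (subst (asm) choice_iff) blast
    then have r0: "\<And>x. r x > 0" and
      rP: "\<And>x y. x \<in> {c<..<d} \<Longrightarrow> x \<notin> S \<Longrightarrow> norm (y - x) < r x \<Longrightarrow>
               norm (F y - F x - f x * (y - x)) \<le> \<epsilon> * norm (y - x)"
      by auto
    define \<gamma> where "\<gamma> x = \<gamma>1 x \<inter> ball x (r x)" for x
    have g: "gauge \<gamma>" unfolding \<gamma>_def
      using gauge_Int[OF \<gamma>1 gauge_ball_dependent[of r]] r0 by auto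
    show "\<exists>\<gamma>. gauge \<gamma> \<and> (\<forall>\<D>. \<D> tagged_division_of cbox c d \<and> \<gamma> fine \<D> \<longrightarrow>
           norm ((\<Sum>(x, K)\<in>\<D>. content K *\<^sub>R f0 x) - (F d - F c)) < e)"
    proof (intro exI conjI allI impI)
      show "gauge \<gamma>" by (rule g)
      fix p assume pp: "p tagged_division_of cbox c d \<and> \<gamma> fine p"
      then have ptag: "p tagged_division_of {c..d}" and fine: "\<gamma> fine p" by auto
      have fin: "finite p" using ptag by (rule tagged_division_ofD(1))
      have fine1: "\<gamma>1 fine p" using fine unfolding \<gamma>_def fine_def by auto
      have props: "Inf K \<le> x \<and> x \<le> Sup K \<and> K = {Inf K..Sup K} \<and> content K = Sup K - Inf K \<and>
          c \<le> Inf K \<and> Sup K \<le> d \<and> K \<subseteq> ball x (r x)" if xKp: "(x,K) \<in> p" for x K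
      proof -
        obtain u v where K: "K = cbox u v" using tagged_division_ofD(4)[OF ptag xKp] by blast
        have xK: "x \<in> K" using tagged_division_ofD(2)[OF ptag xKp] .
        have Ks: "K \<subseteq> {c..d}" using tagged_division_ofD(3)[OF ptag xKp] .
        have uv: "u \<le> v" using xK K by auto
        have "K \<subseteq> ball x (r x)" using fine xKp unfolding \<gamma>_def fine_def by blast
        then show ?thesis using K uv xK Ks by auto
      qed
      define T where "T = (\<lambda>(x::real, K::real set). content K * f0 x - (F (Sup K) - F (Inf K)))"
      have eq: "(\<Sum>(x, K)\<in>p. content K *\<^sub>R f0 x) - (F d - F c) = (\<Sum>xK\<in>p. T xK)"
        using additive_tagged_division_1[OF cd ptag, of F]
        by (simp add: T_def sum_subtractf case_prod_unfold)
      define p1 where "p1 = {xK \<in> p. fst xK \<in> E}"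
      define p2 where "p2 = {xK \<in> p. fst xK \<notin> E}"
      have split: "(\<Sum>xK\<in>p. \<bar>T xK\<bar>) = (\<Sum>xK\<in>p1. \<bar>T xK\<bar>) + (\<Sum>xK\<in>p2. \<bar>T xK\<bar>)"
      proof -
        have "p = p1 \<union> p2" "p1 \<inter> p2 = {}" "finite p1" "finite p2"
          using fin by (auto simp: p1_def p2_def)
        then show ?thesis by (simp add: sum.union_disjoint)
      qed
      have p2b: "(\<Sum>xK\<in>p2. \<bar>T xK\<bar>) \<le> \<epsilon> * (d - c)"
      proof -
        have "\<bar>T (x,K)\<bar> \<le> \<epsilon> * content K" if "(x,K) \<in> p2" for x K
        proof -
          have xK: "(x,K) \<in> p" and xE: "x \<notin> E" using that by (auto simp: p2_def)
          note pr = props[OF xK]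
          define u where "u = Inf K"
          define v where "v = Sup K"
          have xcd: "x \<in> {c<..<d}" "x \<notin> S" using pr xE by (auto simp: E_def)
          have "u \<in> K" "v \<in> K" using pr by (auto simp: u_def v_def)
          then have uv: "norm (u - x) < r x" "norm (v - x) < r x" using pr by (auto simp: dist_real_def)
          have "T (x,K) = - (F v - F x - f x * (v - x)) + (F u - F x - f x * (u - x))"
          proof -
            have cK: "content K = Sup K - Inf K" using pr by simp
            show ?thesis using xE by (simp add: T_def f0_def cK u_def v_def algebra_simps)
          qed
          then have "\<bar>T (x,K)\<bar> \<le> \<epsilon> * norm (v - x) + \<epsilon> * norm (u - x)"
            using rP[OF xcd uv(1)] rP[OF xcd uv(2)] by simp
          also have "\<dots> = \<epsilon> * content K"
          proof -
            have cK: "content K = v - u" using pr by (simp add: u_def v_def)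
            have "norm (v - x) = v - x" "norm (u - x) = x - u" using pr by (auto simp: u_def v_def)
            then show ?thesis by (simp add: cK algebra_simps)
          qed
          finally show ?thesis .
        qed
        then have "(\<Sum>xK\<in>p2. \<bar>T xK\<bar>) \<le> (\<Sum>xK\<in>p2. \<epsilon> * content (snd xK))"
          by (intro sum_mono) auto
        also have "\<dots> \<le> (\<Sum>xK\<in>p. \<epsilon> * content (snd xK))"
          using fin \<epsilon> by (intro sum_mono2) (auto simp: p2_def)
        also have "\<dots> = \<epsilon> * (d - c)"
          using additive_content_tagged_division[OF pp[THEN conjunct1]] cd
          by (simp add: sum_distrib_left[symmetric] case_prod_unfold)
        finally show ?thesis .
      qed
      have p1b: "(\<Sum>xK\<in>p1. \<bar>T xK\<bar>) < e/2"
      proof -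
        define q where "q = {xK \<in> p1. content (snd xK) \<noteq> 0}"
        have finq: "finite q" using fin by (auto simp: q_def p1_def)
        have s1: "(\<Sum>xK\<in>p1. \<bar>T xK\<bar>) = (\<Sum>xK\<in>q. \<bar>F (Sup (snd xK)) - F (Inf (snd xK))\<bar>)"
        proof (rule sum.mono_neutral_cong_right)
          show "finite p1" using fin by (auto simp: p1_def)
          show "q \<subseteq> p1" by (auto simp: q_def)
          show "\<forall>i\<in>p1 - q. \<bar>T i\<bar> = 0"
          proof
            fix i assume i: "i \<in> p1 - q"
            then obtain x K where xK: "i = (x,K)" "(x,K) \<in> p" "content K = 0" "x \<in> E"
              by (cases i) (auto simp: q_def p1_def)
            then show "\<bar>T i\<bar> = 0" using props[OF xK(2)] by (simp add: T_def f0_def)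
          qed
          show "\<And>i. i \<in> q \<Longrightarrow> \<bar>T i\<bar> = \<bar>F (Sup (snd i)) - F (Inf (snd i))\<bar>"
            by (auto simp: T_def f0_def q_def p1_def case_prod_unfold)
        qed
        obtain m :: nat and g where qg: "q = g ` {i. i < m}" and ginj: "inj_on g {i. i < m}"
          using finite_imp_nat_seg_image_inj_on[OF finq] by blast
        have lt: "{..<m} = {i. i < m}" by auto
        define u where "u i = Inf (snd (g i))" for i
        define v where "v i = Sup (snd (g i))" for i
        have gq: "g i \<in> q" if "i < m" for i using that qg by auto
        have gp: "(fst (g i), snd (g i)) \<in> p" "content (snd (g i)) \<noteq> 0" "fst (g i) \<in> E" if "i < m" for i
          using gq[OF that] by (auto simp: q_def p1_def)
        have h1: "\<forall>i<m. c \<le> u i \<and> u i \<le> v i \<and> v i \<le> d"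
        proof (intro allI impI)
          fix i assume "i < m"
          note pr = props[OF gp(1)[OF this]]
          show "c \<le> u i \<and> u i \<le> v i \<and> v i \<le> d" unfolding u_def v_def
            using pr by (intro conjI; linarith)
        qed
        have h2: "\<forall>i<m. \<forall>j<m. i \<noteq> j \<longrightarrow> v i \<le> u j \<or> v j \<le> u i"
        proof (intro allI impI)
          fix i j assume ij: "i < m" "j < m" "i \<noteq> j"
          have ne: "g i \<noteq> g j" using ginj ij by (auto dest: inj_onD)
          have disj: "interior (snd (g i)) \<inter> interior (snd (g j)) = {}"
            using tagged_division_ofD(5)[OF ptag gp(1)[OF ij(1)] gp(1)[OF ij(2)]] ne by (simp add: prod_eq_iff)
          note pi = props[OF gp(1)[OF ij(1)]] and pj = props[OF gp(1)[OF ij(2)]]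
          have "u i < v i" "u j < v j" using pi pj gp(2)[OF ij(1)] gp(2)[OF ij(2)] by (auto simp: u_def v_def)
          moreover have "{u i<..<v i} \<inter> {u j<..<v j} = {}"
            using disj pi pj by (metis interior_atLeastAtMost_real u_def v_def)
          ultimately show "v i \<le> u j \<or> v j \<le> u i" by (rule nonoverlap_real)
        qed
        have sq: "(\<Sum>xK\<in>q. H xK) = (\<Sum>i<m. H (g i))" for H :: "real \<times> real set \<Rightarrow> real"
          unfolding qg lt by (rule sum.reindex[OF ginj, unfolded comp_def])
        have h3: "(\<Sum>i<m. v i - u i) < \<delta>"
        proof -
          have "(\<Sum>i<m. v i - u i) = (\<Sum>xK\<in>q. content (snd xK))"
            unfolding sq using props[OF gp(1)] by (auto simp: u_def v_def intro!: sum.cong)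
          also have "\<dots> = (\<Sum>(x,K)\<in>p. content K *\<^sub>R indicat_real E x)"
          proof (rule sum.mono_neutral_cong_right[symmetric])
            show "finite p" by (rule fin)
            show "q \<subseteq> p" by (auto simp: q_def p1_def)
            show "\<forall>i\<in>p - q. (\<lambda>(x,K). content K *\<^sub>R indicat_real E x) i = 0"
              by (auto simp: q_def p1_def indicator_def)
            show "\<And>i. i \<in> q \<Longrightarrow> (\<lambda>(x,K). content K *\<^sub>R indicat_real E x) i = content (snd i)"
              by (auto simp: q_def p1_def indicator_def)
          qed
          also have "\<dots> < \<delta>" using \<gamma>1P pp fine1 by auto
          finally show ?thesis .
        qed
        have "(\<Sum>i<m. \<bar>F (v i) - F (u i)\<bar>) < e/2"
          using \<delta>P h1 h2 h3 by blast
        then show ?thesis unfolding s1 sq by (simp add: u_def v_def)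
      qed
      have "norm ((\<Sum>(x, K)\<in>p. content K *\<^sub>R f0 x) - (F d - F c)) = \<bar>\<Sum>xK\<in>p. T xK\<bar>"
        using eq by simp
      also have "\<dots> \<le> (\<Sum>xK\<in>p. \<bar>T xK\<bar>)" by (rule sum_abs)
      also have "\<dots> < e" using split p1b p2b \<epsilon>2 by linarith
      finally show "norm ((\<Sum>(x, K)\<in>p. content K *\<^sub>R f0 x) - (F d - F c)) < e" .
    qed
  qed
  show ?thesis by (rule has_integral_spike[OF E _ f0i[unfolded cbox_interval]]) (auto simp: f0_def)
qed

lemma acD:
  assumes "abs_cont_on c d f" "e > 0"
  shows "\<exists>\<delta>>0. \<forall>(m::nat) (u::nat\<Rightarrow>real) (v::nat\<Rightarrow>real). (\<forall>i<m. c \<le> u i \<and> u i \<le> v i \<and> v i \<le> d) \<longrightarrow>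
          (\<forall>i<m. \<forall>j<m. i \<noteq> j \<longrightarrow> v i \<le> u j \<or> v j \<le> u i) \<longrightarrow>
          (\<Sum>i<m. v i - u i) < \<delta> \<longrightarrow> (\<Sum>i<m. \<bar>f (v i) - f (u i)\<bar>) < e"
  using assms unfolding abs_cont_on_def by blast

lemma acI:
  assumes "\<And>e. e > 0 \<Longrightarrow> \<exists>\<delta>>0. \<forall>(m::nat) u v. (\<forall>i<m. c \<le> u i \<and> u i \<le> v i \<and> v i \<le> d) \<longrightarrow>
          (\<forall>i<m. \<forall>j<m. i \<noteq> j \<longrightarrow> v i \<le> u j \<or> v j \<le> u i) \<longrightarrow>
          (\<Sum>i<m. v i - u i) < \<delta> \<longrightarrow> (\<Sum>i<m. \<bar>f (v i) - f (u i)\<bar>) < e"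
  shows "abs_cont_on c d f"
  unfolding abs_cont_on_def by (intro allI impI assms)

lemma ac_sub:
  assumes "abs_cont_on a b f" "a \<le> c" "d \<le> b"
  shows "abs_cont_on c d f"
proof (rule acI)
  fix e :: real assume "e > 0"
  obtain \<delta> where "\<delta> > 0" and P: "\<forall>(m::nat) (u::nat\<Rightarrow>real) (v::nat\<Rightarrow>real). (\<forall>i<m. a \<le> u i \<and> u i \<le> v i \<and> v i \<le> b) \<longrightarrow>
          (\<forall>i<m. \<forall>j<m. i \<noteq> j \<longrightarrow> v i \<le> u j \<or> v j \<le> u i) \<longrightarrow>
          (\<Sum>i<m. v i - u i) < \<delta> \<longrightarrow> (\<Sum>i<m. \<bar>f (v i) - f (u i)\<bar>) < e"
    using acD[OF assms(1) \<open>e > 0\<close>] by (elim exE conjE) (rule that)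
  show "\<exists>\<delta>>0. \<forall>(m::nat) u v. (\<forall>i<m. c \<le> u i \<and> u i \<le> v i \<and> v i \<le> d) \<longrightarrow>
          (\<forall>i<m. \<forall>j<m. i \<noteq> j \<longrightarrow> v i \<le> u j \<or> v j \<le> u i) \<longrightarrow>
          (\<Sum>i<m. v i - u i) < \<delta> \<longrightarrow> (\<Sum>i<m. \<bar>f (v i) - f (u i)\<bar>) < e"
  proof (intro exI[of _ \<delta>] conjI allI impI)
    fix m :: nat and u v :: "nat \<Rightarrow> real"
    assume h: "\<forall>i<m. c \<le> u i \<and> u i \<le> v i \<and> v i \<le> d"
      "\<forall>i<m. \<forall>j<m. i \<noteq> j \<longrightarrow> v i \<le> u j \<or> v j \<le> u i" "(\<Sum>i<m. v i - u i) < \<delta>"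
    have h1: "\<forall>i<m. a \<le> u i \<and> u i \<le> v i \<and> v i \<le> b" using h(1) assms(2,3) by force
    show "(\<Sum>i<m. \<bar>f (v i) - f (u i)\<bar>) < e" by (rule P[THEN spec, THEN spec, THEN spec, THEN mp, THEN mp, THEN mp, OF h1 h(2,3)])
  qed (rule \<open>\<delta> > 0\<close>)
qed

lemma ac_lipschitz:
  assumes "\<And>x y. x \<in> {c..d} \<Longrightarrow> y \<in> {c..d} \<Longrightarrow> \<bar>f y - f x\<bar> \<le> L * \<bar>y - x\<bar>"
  shows "abs_cont_on c d f"
proof (rule acI)
  fix e :: real assume e: "e > 0"
  define \<delta> where "\<delta> = e / (\<bar>L\<bar> + 1)"
  have \<delta>: "\<delta> > 0" using e by (simp add: \<delta>_def)
  show "\<exists>\<delta>>0. \<forall>(m::nat) u v. (\<forall>i<m. c \<le> u i \<and> u i \<le> v i \<and> v i \<le> d) \<longrightarrow>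
          (\<forall>i<m. \<forall>j<m. i \<noteq> j \<longrightarrow> v i \<le> u j \<or> v j \<le> u i) \<longrightarrow>
          (\<Sum>i<m. v i - u i) < \<delta> \<longrightarrow> (\<Sum>i<m. \<bar>f (v i) - f (u i)\<bar>) < e"
  proof (intro exI[of _ \<delta>] conjI allI impI)
    fix m :: nat and u v :: "nat \<Rightarrow> real"
    assume h: "\<forall>i<m. c \<le> u i \<and> u i \<le> v i \<and> v i \<le> d"
      "\<forall>i<m. \<forall>j<m. i \<noteq> j \<longrightarrow> v i \<le> u j \<or> v j \<le> u i" "(\<Sum>i<m. v i - u i) < \<delta>"
    have "(\<Sum>i<m. \<bar>f (v i) - f (u i)\<bar>) \<le> (\<Sum>i<m. \<bar>L\<bar> * (v i - u i))"
    proof (rule sum_mono)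
      fix i assume "i \<in> {..<m}"
      then have i: "c \<le> u i" "u i \<le> v i" "v i \<le> d" using h(1) by auto
      have "\<bar>f (v i) - f (u i)\<bar> \<le> L * \<bar>v i - u i\<bar>" using assms[of "u i" "v i"] i by simp
      also have "\<dots> \<le> \<bar>L\<bar> * (v i - u i)" using i mult_right_mono[OF abs_ge_self[of L], of "v i - u i"] by simp
      finally show "\<bar>f (v i) - f (u i)\<bar> \<le> \<bar>L\<bar> * (v i - u i)" .
    qed
    also have "\<dots> = \<bar>L\<bar> * (\<Sum>i<m. v i - u i)" by (simp add: sum_distrib_left)
    also have "\<dots> \<le> \<bar>L\<bar> * \<delta>" using h(3) by (intro mult_left_mono) auto
    also have "\<dots> < e" using e by (simp add: \<delta>_def field_simps)
    finally show "(\<Sum>i<m. \<bar>f (v i) - f (u i)\<bar>) < e" .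
  qed (rule \<delta>)
qed

lemma ac_add:
  assumes "abs_cont_on c d f" "abs_cont_on c d g"
  shows "abs_cont_on c d (\<lambda>x. f x + g x)"
proof (rule acI)
  fix e :: real assume e: "e > 0"
  then have e2: "e/2 > 0" by simp
  obtain \<delta>1 where d1: "\<delta>1 > 0" and P1: "\<forall>(m::nat) (u::nat\<Rightarrow>real) (v::nat\<Rightarrow>real). (\<forall>i<m. c \<le> u i \<and> u i \<le> v i \<and> v i \<le> d) \<longrightarrow>
          (\<forall>i<m. \<forall>j<m. i \<noteq> j \<longrightarrow> v i \<le> u j \<or> v j \<le> u i) \<longrightarrow>
          (\<Sum>i<m. v i - u i) < \<delta>1 \<longrightarrow> (\<Sum>i<m. \<bar>f (v i) - f (u i)\<bar>) < e/2"
    using acD[OF assms(1) e2] by (elim exE conjE) (rule that)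
  obtain \<delta>2 where d2: "\<delta>2 > 0" and P2: "\<forall>(m::nat) (u::nat\<Rightarrow>real) (v::nat\<Rightarrow>real). (\<forall>i<m. c \<le> u i \<and> u i \<le> v i \<and> v i \<le> d) \<longrightarrow>
          (\<forall>i<m. \<forall>j<m. i \<noteq> j \<longrightarrow> v i \<le> u j \<or> v j \<le> u i) \<longrightarrow>
          (\<Sum>i<m. v i - u i) < \<delta>2 \<longrightarrow> (\<Sum>i<m. \<bar>g (v i) - g (u i)\<bar>) < e/2"
    using acD[OF assms(2) e2] by (elim exE conjE) (rule that)
  show "\<exists>\<delta>>0. \<forall>(m::nat) u v. (\<forall>i<m. c \<le> u i \<and> u i \<le> v i \<and> v i \<le> d) \<longrightarrow>
          (\<forall>i<m. \<forall>j<m. i \<noteq> j \<longrightarrow> v i \<le> u j \<or> v j \<le> u i) \<longrightarrow>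
          (\<Sum>i<m. v i - u i) < \<delta> \<longrightarrow> (\<Sum>i<m. \<bar>(f (v i) + g (v i)) - (f (u i) + g (u i))\<bar>) < e"
  proof (intro exI[of _ "min \<delta>1 \<delta>2"] conjI allI impI)
    fix m :: nat and u v :: "nat \<Rightarrow> real"
    assume h: "\<forall>i<m. c \<le> u i \<and> u i \<le> v i \<and> v i \<le> d"
      "\<forall>i<m. \<forall>j<m. i \<noteq> j \<longrightarrow> v i \<le> u j \<or> v j \<le> u i" "(\<Sum>i<m. v i - u i) < min \<delta>1 \<delta>2"
    have "(\<Sum>i<m. \<bar>(f (v i) + g (v i)) - (f (u i) + g (u i))\<bar>) \<le>
          (\<Sum>i<m. \<bar>f (v i) - f (u i)\<bar>) + (\<Sum>i<m. \<bar>g (v i) - g (u i)\<bar>)"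
      by (simp add: sum.distrib[symmetric] sum_mono)
    also have "\<dots> < e/2 + e/2" using P1[THEN spec, THEN spec, THEN spec, THEN mp, THEN mp, THEN mp, OF h(1,2)] P2[THEN spec, THEN spec, THEN spec, THEN mp, THEN mp, THEN mp, OF h(1,2)] h(3) by (intro add_strict_mono) auto
    finally show "(\<Sum>i<m. \<bar>(f (v i) + g (v i)) - (f (u i) + g (u i))\<bar>) < e" by simp
  qed (use d1 d2 in auto)
qed

lemma ac_mult:
  assumes "abs_cont_on c d f" "abs_cont_on c d g" "continuous_on {c..d} f" "continuous_on {c..d} g"
  shows "abs_cont_on c d (\<lambda>x. f x * g x)"
proof (rule acI)
  fix e :: real assume e: "e > 0"
  obtain B1 where B1: "\<forall>x\<in>{c..d}. norm (f x) \<le> B1"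
    using compact_imp_bounded[OF compact_continuous_image[OF assms(3) compact_Icc]] by (auto simp: bounded_iff)
  obtain B2 where B2: "\<forall>x\<in>{c..d}. norm (g x) \<le> B2"
    using compact_imp_bounded[OF compact_continuous_image[OF assms(4) compact_Icc]] by (auto simp: bounded_iff)
  define B where "B = \<bar>B1\<bar> + \<bar>B2\<bar> + 1"
  have B: "B > 0" "\<forall>x\<in>{c..d}. \<bar>f x\<bar> \<le> B \<and> \<bar>g x\<bar> \<le> B"
  proof -
    show "B > 0" by (simp add: B_def add_nonneg_pos)
    show "\<forall>x\<in>{c..d}. \<bar>f x\<bar> \<le> B \<and> \<bar>g x\<bar> \<le> B"
    proof
      fix x assume x: "x \<in> {c..d}"
      have "\<bar>f x\<bar> \<le> B1" "\<bar>g x\<bar> \<le> B2" using B1 B2 x by auto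
      then show "\<bar>f x\<bar> \<le> B \<and> \<bar>g x\<bar> \<le> B" unfolding B_def by linarith
    qed
  qed
  have e2: "e/(2*B) > 0" using e B by simp
  obtain \<delta>1 where d1: "\<delta>1 > 0" and P1: "\<forall>(m::nat) (u::nat\<Rightarrow>real) (v::nat\<Rightarrow>real). (\<forall>i<m. c \<le> u i \<and> u i \<le> v i \<and> v i \<le> d) \<longrightarrow>
          (\<forall>i<m. \<forall>j<m. i \<noteq> j \<longrightarrow> v i \<le> u j \<or> v j \<le> u i) \<longrightarrow>
          (\<Sum>i<m. v i - u i) < \<delta>1 \<longrightarrow> (\<Sum>i<m. \<bar>f (v i) - f (u i)\<bar>) < e/(2*B)"
    using acD[OF assms(1) e2] by (elim exE conjE) (rule that)
  obtain \<delta>2 where d2: "\<delta>2 > 0" and P2: "\<forall>(m::nat) (u::nat\<Rightarrow>real) (v::nat\<Rightarrow>real). (\<forall>i<m. c \<le> u i \<and> u i \<le> v i \<and> v i \<le> d) \<longrightarrow>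
          (\<forall>i<m. \<forall>j<m. i \<noteq> j \<longrightarrow> v i \<le> u j \<or> v j \<le> u i) \<longrightarrow>
          (\<Sum>i<m. v i - u i) < \<delta>2 \<longrightarrow> (\<Sum>i<m. \<bar>g (v i) - g (u i)\<bar>) < e/(2*B)"
    using acD[OF assms(2) e2] by (elim exE conjE) (rule that)
  show "\<exists>\<delta>>0. \<forall>(m::nat) u v. (\<forall>i<m. c \<le> u i \<and> u i \<le> v i \<and> v i \<le> d) \<longrightarrow>
          (\<forall>i<m. \<forall>j<m. i \<noteq> j \<longrightarrow> v i \<le> u j \<or> v j \<le> u i) \<longrightarrow>
          (\<Sum>i<m. v i - u i) < \<delta> \<longrightarrow> (\<Sum>i<m. \<bar>f (v i) * g (v i) - f (u i) * g (u i)\<bar>) < e"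
  proof (intro exI[of _ "min \<delta>1 \<delta>2"] conjI allI impI)
    fix m :: nat and u v :: "nat \<Rightarrow> real"
    assume h: "\<forall>i<m. c \<le> u i \<and> u i \<le> v i \<and> v i \<le> d"
      "\<forall>i<m. \<forall>j<m. i \<noteq> j \<longrightarrow> v i \<le> u j \<or> v j \<le> u i" "(\<Sum>i<m. v i - u i) < min \<delta>1 \<delta>2"
    have "(\<Sum>i<m. \<bar>f (v i) * g (v i) - f (u i) * g (u i)\<bar>) \<le>
          (\<Sum>i<m. B * \<bar>g (v i) - g (u i)\<bar> + B * \<bar>f (v i) - f (u i)\<bar>)"
    proof (rule sum_mono)
      fix i assume "i \<in> {..<m}"
      then have i: "u i \<in> {c..d}" "v i \<in> {c..d}" using h(1) by auto
      have "\<bar>f (v i) * g (v i) - f (u i) * g (u i)\<bar> = \<bar>f (v i) * (g (v i) - g (u i)) + g (u i) * (f (v i) - f (u i))\<bar>"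
        by (simp add: algebra_simps)
      also have "\<dots> \<le> \<bar>f (v i)\<bar> * \<bar>g (v i) - g (u i)\<bar> + \<bar>g (u i)\<bar> * \<bar>f (v i) - f (u i)\<bar>"
        by (metis abs_mult abs_triangle_ineq)
      also have "\<dots> \<le> B * \<bar>g (v i) - g (u i)\<bar> + B * \<bar>f (v i) - f (u i)\<bar>"
        using B(2) i by (intro add_mono mult_right_mono) auto
      finally show "\<bar>f (v i) * g (v i) - f (u i) * g (u i)\<bar> \<le> B * \<bar>g (v i) - g (u i)\<bar> + B * \<bar>f (v i) - f (u i)\<bar>" .
    qed
    also have "\<dots> = B * (\<Sum>i<m. \<bar>g (v i) - g (u i)\<bar>) + B * (\<Sum>i<m. \<bar>f (v i) - f (u i)\<bar>)"
      by (simp add: sum.distrib sum_distrib_left)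
    also have "\<dots> < B * (e/(2*B)) + B * (e/(2*B))"
      using P1[THEN spec, THEN spec, THEN spec, THEN mp, THEN mp, THEN mp, OF h(1,2)] P2[THEN spec, THEN spec, THEN spec, THEN mp, THEN mp, THEN mp, OF h(1,2)] h(3) B(1) by (intro add_strict_mono mult_strict_left_mono) auto
    also have "\<dots> = e" using B(1) by (simp add: field_simps)
    finally show "(\<Sum>i<m. \<bar>f (v i) * g (v i) - f (u i) * g (u i)\<bar>) < e" .
  qed (use d1 d2 in auto)
qed

lemma ac_const: "abs_cont_on c d (\<lambda>x. C)"
  by (rule ac_lipschitz[of _ _ _ 0]) auto

lemma ac_sum:
  assumes "finite I" "\<And>i. i \<in> I \<Longrightarrow> abs_cont_on c d (f i)"
  shows "abs_cont_on c d (\<lambda>x. \<Sum>i\<in>I. f i x)"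
  using assms
proof (induction I rule: finite_induct)
  case empty
  then show ?case using ac_const[of c d 0] by simp
next
  case (insert j I)
  then show ?case using ac_add[of c d "f j" "\<lambda>x. \<Sum>i\<in>I. f i x"] by simp
qed

lemma ac_deriv:
  assumes "c \<le> d" "\<And>x. x \<in> {c..d} \<Longrightarrow> (f has_real_derivative f' x) (at x within {c..d})"
    "continuous_on {c..d} f'"
  shows "abs_cont_on c d f"
proof -
  obtain B where B: "\<forall>x\<in>{c..d}. norm (f' x) \<le> B"
    using compact_imp_bounded[OF compact_continuous_image[OF assms(3) compact_Icc]] by (auto simp: bounded_iff)
  have L: "\<bar>f y - f x\<bar> \<le> B * \<bar>y - x\<bar>" if "x \<in> {c..d}" "y \<in> {c..d}" "x < y" for x y
  proof -
    have "\<And>t. x \<le> t \<Longrightarrow> t \<le> y \<Longrightarrow> (f has_derivative (\<lambda>h. f' t * h)) (at t within {x..y})"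
    proof -
      fix t assume t: "x \<le> t" "t \<le> y"
      then have "(f has_real_derivative f' t) (at t within {c..d})" using assms(2) that by auto
      then have "(f has_real_derivative f' t) (at t within {x..y})"
        by (rule has_field_derivative_subset) (use that in auto)
      then show "(f has_derivative (\<lambda>h. f' t * h)) (at t within {x..y})"
        by (simp add: has_field_derivative_def)
    qed
    from mvt_simple[OF that(3) this] obtain z where z: "z \<in> {x<..<y}" "f y - f x = f' z * (y - x)" by auto
    have "\<bar>f' z\<bar> \<le> B" using B z that by auto
    then show ?thesis using z that by (simp add: abs_mult mult.commute mult_right_mono)
  qed
  show ?thesis
  proof (rule ac_lipschitz[of c d f B])
    fix x y assume xy: "x \<in> {c..d}" "y \<in> {c..d}"
    show "\<bar>f y - f x\<bar> \<le> B * \<bar>y - x\<bar>"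
    proof (cases x y rule: linorder_cases)
      case less then show ?thesis using L xy by auto
    next
      case equal then show ?thesis using B xy by auto
    next
      case greater then show ?thesis using L[of y x] xy by (simp add: abs_minus_commute)
    qed
  qed
qed

definition wpoly :: "nat \<Rightarrow> real poly" where
  "wpoly k = smult (1 / fact (2*k+2)) ([:0, 1:] ^ (k+1) * [:1, -1:] ^ (k+1))"

definition Vf :: "nat \<Rightarrow> real \<Rightarrow> real \<Rightarrow> nat \<Rightarrow> real \<Rightarrow> real" where
  "Vf k c h m x = h^(2*k+2-m) * poly ((pderiv^^m) (wpoly k)) ((x-c)/h)"

lemma mu_eq: "mu k x = poly ((pderiv^^(k+1)) (wpoly k)) x"
  unfolding mu_def wpoly_def by simp

lemma wpoly_vanish0: "m \<le> k \<Longrightarrow> poly ((pderiv^^m) (wpoly k)) 0 = 0"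
proof -
  assume m: "m \<le> k"
  have "[:0,1::real:]^(k+1) dvd [:0,1:]^(k+1) * [:1,-1:]^(k+1)" by (rule dvd_triv_left)
  then have "[:-0,1:]^(Suc k) dvd wpoly k" unfolding wpoly_def
    by (intro dvd_smult) simp
  then show ?thesis using funpow_pderiv_vanish[of 0 "Suc k" "wpoly k" m] m by simp
qed

lemma wpoly_vanish1: "m \<le> k \<Longrightarrow> poly ((pderiv^^m) (wpoly k)) 1 = 0"
proof -
  assume m: "m \<le> k"
  have "[:-1,1:] dvd [:1,-1::real:]"
  proof
    show "[:1,-1::real:] = [:-1,1:] * [:-1:]" by simp
  qed
  then have "[:-1,1:]^(Suc k) dvd [:1,-1::real:]^(k+1)" by (simp add: dvd_power_same del: power_Suc)
  then have "[:-1,1:]^(Suc k) dvd wpoly k" unfolding wpoly_def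
    by (intro dvd_smult dvd_mult) 
  then show ?thesis using funpow_pderiv_vanish[of 1 "Suc k" "wpoly k" m] m by simp
qed

lemma wpoly_top: "(pderiv^^(2*k+2)) (wpoly k) = [:(-1)^(k+1):]"
proof -
  define A :: "real poly" where "A = [:0, 1:] ^ (k+1)"
  define B :: "real poly" where "B = [:1, -1:] ^ (k+1)"
  have dA: "degree A = k+1" and cA: "coeff A (k+1) = 1" unfolding A_def
    using degree_linear_power[of "0::real" "k+1"] coeff_linear_power[of "0::real" "k+1"] by simp_all
  have dB: "degree B = k+1" and cB: "coeff B (k+1) = (-1)^(k+1)" unfolding B_def
    using degree_linear_power_neg[of "1::real" "k+1"] coeff_linear_power_neg[of "1::real" "k+1"] by simp_all
  have deg: "degree (wpoly k) \<le> 2*k+2" unfolding wpoly_def A_def[symmetric] B_def[symmetric]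
    using degree_mult_le[of A B] dA dB by (simp add: degree_smult_le order_trans[OF degree_smult_le])
  have "coeff (A * B) (2*k+2) = (-1)^(k+1)"
    using coeff_mult_degree_sum[of A B] dA dB cA cB by (simp add: mult_2)
  then have "coeff (wpoly k) (2*k+2) = (-1)^(k+1) / fact (2*k+2)"
    unfolding wpoly_def A_def[symmetric] B_def[symmetric] by simp
  then show ?thesis using funpow_pderiv_top[OF deg] by simp
qed

lemma deriv_polycomp:
  fixes h C c :: real and p :: "real poly"
  assumes "h \<noteq> 0"
  shows "((\<lambda>x. C * poly p ((x - c)/h)) has_real_derivative C * poly (pderiv p) ((x - c)/h) / h) (at x within S)"
proof -
  have "((\<lambda>x. (x - c)/h) has_real_derivative 1/h) (at x within S)"
    using assms by (auto intro!: derivative_eq_intros)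
  from DERIV_chain2[OF poly_DERIV this]
  have "((\<lambda>x. poly p ((x - c)/h)) has_real_derivative poly (pderiv p) ((x - c)/h) * (1/h)) (at x within S)" .
  from DERIV_cmult[OF this, of C] show ?thesis by simp
qed

lemma cont_polycomp:
  fixes h C c :: real and p :: "real poly"
  assumes "h \<noteq> 0"
  shows "continuous_on S (\<lambda>x. C * poly p ((x - c)/h))"
  by (rule DERIV_continuous_on) (rule deriv_polycomp[OF assms])

lemma ac_polycomp:
  fixes h C c :: real and p :: "real poly"
  assumes "h \<noteq> 0" "a \<le> b"
  shows "abs_cont_on a b (\<lambda>x. C * poly p ((x - c)/h))"
proof (rule ac_deriv[OF assms(2)])
  show "\<And>x. x \<in> {a..b} \<Longrightarrow> ((\<lambda>x. C * poly p ((x - c)/h)) has_real_derivative C * poly (pderiv p) ((x - c)/h) / h) (at x within {a..b})"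
    by (rule deriv_polycomp[OF assms(1)])
  show "continuous_on {a..b} (\<lambda>x. C * poly (pderiv p) ((x - c)/h) / h)"
    using cont_polycomp[OF assms(1), of "{a..b}" "C / h" "pderiv p" c] by simp
qed

lemma cont_poly: "continuous_on S (poly (p::real poly))"
  by (rule DERIV_continuous_on) (rule has_field_derivative_at_within[OF poly_DERIV])

lemma ac_poly: "a \<le> b \<Longrightarrow> abs_cont_on a b (poly (p::real poly))"
  by (rule ac_deriv) (auto intro: has_field_derivative_at_within[OF poly_DERIV] cont_poly)

lemma Vf_deriv:
  assumes "h \<noteq> 0" "m < 2*k+2"
  shows "(Vf k c h m has_real_derivative Vf k c h (Suc m) x) (at x within S)"
proof -
  have e: "Vf k c h m = (\<lambda>x. h^(2*k+2-m) * poly ((pderiv^^m) (wpoly k)) ((x-c)/h))"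
    by (simp add: Vf_def fun_eq_iff)
  have "h^(2*k+2-m) = h^(2*k+2-Suc m) * h" using assms(2)
    by (metis Suc_diff_Suc power_Suc2 Suc_leI le_imp_less_Suc less_Suc_eq_le)
  then have "h^(2*k+2-m) * poly (pderiv ((pderiv^^m) (wpoly k))) ((x-c)/h) / h = Vf k c h (Suc m) x"
    using assms(1) by (simp add: Vf_def)
  then show ?thesis unfolding e using deriv_polycomp[OF assms(1)] by metis
qed

lemma Vf_ac: "h \<noteq> 0 \<Longrightarrow> a \<le> b \<Longrightarrow> abs_cont_on a b (Vf k c h m)"
  unfolding Vf_def using ac_polycomp by blast

lemma Vf_cont: "h \<noteq> 0 \<Longrightarrow> continuous_on S (Vf k c h m)"
  unfolding Vf_def using cont_polycomp by blast

lemma Vf_c: "h \<noteq> 0 \<Longrightarrow> m \<le> k \<Longrightarrow> Vf k c h m c = 0"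
  by (simp add: Vf_def wpoly_vanish0)

lemma Vf_d: "h \<noteq> 0 \<Longrightarrow> m \<le> k \<Longrightarrow> Vf k c h m (c + h) = 0"
  by (simp add: Vf_def wpoly_vanish1)

lemma Vf_top: "Vf k c h (2*k+2) x = (-1)^(k+1)"
  unfolding Vf_def wpoly_top by simp

lemma Vf_mu: "Vf k c h (k+1) x = h^(k+1) * mu k ((x-c)/h)"
proof -
  have "2*k+2-(k+1) = k+1" by simp
  then show ?thesis by (simp add: Vf_def mu_eq)
qed

lemma telescope:
  fixes B :: "nat \<Rightarrow> real"
  shows "(\<Sum>i\<le>k. (-1)^i * (B i + (if i = 0 then Z else B (i-1)))) = Z + (-1)^k * B k"
  by (induction k) (auto simp: algebra_simps)

lemma cell:
  fixes k :: nat and c d :: real and Df :: "nat \<Rightarrow> real \<Rightarrow> real" and g :: "real \<Rightarrow> real"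
    and P :: "real poly" and S :: "real set"
  assumes cd: "c < d"
    and D: "\<And>l x. l < k \<Longrightarrow> x \<in> {c..d} \<Longrightarrow> (Df l has_real_derivative Df (Suc l) x) (at x within {c..d})"
    and cont: "continuous_on {c..d} (Df k)"
    and ac: "abs_cont_on c d (Df k)"
    and S: "negligible S"
    and gd: "\<And>x. x \<in> {c<..<d} \<Longrightarrow> x \<notin> S \<Longrightarrow> (Df k has_real_derivative g x) (at x)"
    and Pd: "degree P \<le> 2*k+1"
    and Pc: "\<And>l. l \<le> k \<Longrightarrow> poly ((pderiv^^l) P) c = Df l c \<and> poly ((pderiv^^l) P) d = Df l d"
  shows "((\<lambda>x. Vf k c (d-c) (k+1) x * g x) has_integral
           (integral {c..d} (Df 0) - integral {c..d} (poly P))) {c..d}"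
proof -
  define h where "h = d - c"
  have h0: "h \<noteq> 0" and hd: "c + h = d" using cd by (auto simp: h_def)
  have cdle: "c \<le> d" using cd by simp
  define V where "V = Vf k c h"
  define Pl where "Pl l = (pderiv^^l) P" for l
  define \<psi> where "\<psi> l x = Df l x - poly (Pl l) x" for l x
  have contDf: "continuous_on {c..d} (Df l)" if "l \<le> k" for l
  proof (cases "l < k")
    case True
    show ?thesis by (rule DERIV_continuous_on[of _ _ "Df (Suc l)"]) (rule D[OF True])
  next
    case False
    then show ?thesis using cont that by (simp add: le_antisym)
  qed
  have acDf: "abs_cont_on c d (Df l)" if "l \<le> k" for l
  proof (cases "l < k")
    case True
    show ?thesis by (rule ac_deriv[OF cdle]) (auto intro: D[OF True] contDf[of "Suc l"] simp: Suc_leI True)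
  next
    case False
    then show ?thesis using ac that by (simp add: le_antisym)
  qed
  have contPl: "continuous_on S' (\<lambda>x. poly (Pl l) x)" for S' l using cont_poly[of S' "Pl l"] by simp
  have contpsi: "continuous_on {c..d} (\<psi> l)" if "l \<le> k" for l
    unfolding \<psi>_def by (intro continuous_on_diff contDf[OF that] contPl)
  have acpsi: "abs_cont_on c d (\<psi> l)" if "l \<le> k" for l
  proof -
    have "abs_cont_on c d (\<lambda>x. (-1) * poly (Pl l) x)"
      by (rule ac_mult[OF ac_const ac_poly[OF cdle] continuous_on_const cont_poly])
    from ac_add[OF acDf[OF that] this] show ?thesis by (simp add: \<psi>_def[abs_def])
  qed
  have psic: "\<psi> l c = 0" "\<psi> l d = 0" if "l \<le> k" for l
    using Pc[OF that] by (auto simp: \<psi>_def Pl_def)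
  have PlS: "Pl (Suc l) = pderiv (Pl l)" for l by (simp add: Pl_def)
  have Ptop: "Pl (2*k+2) = 0" unfolding Pl_def by (rule funpow_pderiv_zero) (use Pd in simp)
  define T1 where "T1 i x = (-1)^i * (V (k+1+i) x * \<psi> (k-i) x)" for i x
  define T2 where "T2 i x = (-1)^i * (V (k-i) x * poly (Pl (k+1+i)) x)" for i x
  define K where "K x = (\<Sum>i\<le>k. T1 i x) + (\<Sum>i\<le>k. T2 i x)" for x
  have acV: "abs_cont_on c d (V m)" for m unfolding V_def by (rule Vf_ac[OF h0 cdle])
  have contV: "continuous_on {c..d} (V m)" for m unfolding V_def by (rule Vf_cont[OF h0])
  have acT1: "abs_cont_on c d (T1 i)" if "i \<le> k" for i
  proof -
    have "abs_cont_on c d (\<lambda>x. V (k+1+i) x * \<psi> (k-i) x)"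
      by (rule ac_mult[OF acV acpsi contV contpsi]) auto
    from ac_mult[OF ac_const this continuous_on_const continuous_on_mult[OF contV contpsi]]
    show ?thesis by (simp add: T1_def[abs_def])
  qed
  have acT2: "abs_cont_on c d (T2 i)" if "i \<le> k" for i
  proof -
    have "abs_cont_on c d (\<lambda>x. V (k-i) x * poly (Pl (k+1+i)) x)"
      by (rule ac_mult[OF acV ac_poly[OF cdle] contV cont_poly])
    from ac_mult[OF ac_const this continuous_on_const continuous_on_mult[OF contV cont_poly]]
    show ?thesis by (simp add: T2_def[abs_def])
  qed
  have acK: "abs_cont_on c d K"
  proof -
    have "abs_cont_on c d (\<lambda>x. \<Sum>i\<le>k. T1 i x)" by (rule ac_sum) (auto intro: acT1)
    moreover have "abs_cont_on c d (\<lambda>x. \<Sum>i\<le>k. T2 i x)" by (rule ac_sum) (auto intro: acT2)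
    ultimately show ?thesis unfolding K_def[abs_def] by (rule ac_add)
  qed
  have dK: "(K has_real_derivative V (k+1) x * g x - \<psi> 0 x) (at x)"
    if x: "x \<in> {c<..<d}" "x \<notin> S" for x
  proof -
    have atx: "at x within {c..d} = at x" using x by (intro at_within_Icc_at) auto
    have dDf: "(Df l has_real_derivative Df (Suc l) x) (at x)" if "l < k" for l
      using D[OF that, of x] x atx by auto
    have dPl: "((\<lambda>x. poly (Pl n) x) has_real_derivative poly (Pl (Suc n)) x) (at x)" for n
      unfolding PlS by (rule poly_DERIV)
    have dpsi: "(\<psi> l has_real_derivative \<psi> (Suc l) x) (at x)" if "l < k" for l
    proof -
      have "((\<lambda>x. Df l x - poly (Pl l) x) has_real_derivative Df (Suc l) x - poly (Pl (Suc l)) x) (at x)"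
        by (rule DERIV_diff[OF dDf[OF that] dPl])
      then show ?thesis by (simp add: \<psi>_def[abs_def])
    qed
    have dpsik: "(\<psi> k has_real_derivative g x - poly (Pl (Suc k)) x) (at x)"
    proof -
      have "((\<lambda>x. Df k x - poly (Pl k) x) has_real_derivative g x - poly (Pl (Suc k)) x) (at x)"
        by (rule DERIV_diff[OF gd[OF x] dPl])
      then show ?thesis by (simp add: \<psi>_def[abs_def])
    qed
    have dV: "(V m has_real_derivative V (Suc m) x) (at x)" if "m < 2*k+2" for m
      unfolding V_def by (rule Vf_deriv[OF h0 that])
    define B1 where "B1 i = V (k+2+i) x * \<psi> (k-i) x" for i
    define Z1 where "Z1 = V (k+1) x * (g x - poly (Pl (Suc k)) x)"
    define B2 where "B2 i = V (k-i) x * poly (Pl (k+2+i)) x" for i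
    define Z2 where "Z2 = V (k+1) x * poly (Pl (k+1)) x"
    have dT1: "(T1 i has_real_derivative (-1)^i * (B1 i + (if i = 0 then Z1 else B1 (i-1)))) (at x)"
      if i: "i \<le> k" for i
    proof (cases "i = 0")
      case True
      have "((\<lambda>x. V (k+1) x * \<psi> k x) has_real_derivative
              V (Suc (k+1)) x * \<psi> k x + (g x - poly (Pl (Suc k)) x) * V (k+1) x) (at x)"
        by (rule DERIV_mult[OF dV dpsik]) simp
      from DERIV_cmult[OF this, of "(-1)^i"] show ?thesis
        using True by (simp add: T1_def[abs_def] B1_def Z1_def algebra_simps)
    next
      case False
      have dd: "((\<lambda>x. V (k+1+i) x * \<psi> (k-i) x) has_real_derivative
              V (Suc (k+1+i)) x * \<psi> (k-i) x + \<psi> (Suc (k-i)) x * V (k+1+i) x) (at x)"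
        by (rule DERIV_mult[OF dV dpsi]) (use i False in auto)
      have eqs: "k+2+(i-1) = k+1+i" "k-(i-1) = Suc (k-i)" "Suc (k+1+i) = k+2+i"
        using i False by auto
      from DERIV_cmult[OF dd, of "(-1)^i"] show ?thesis using eqs False
        by (simp add: T1_def[abs_def] B1_def algebra_simps)
    qed
    have dT2: "(T2 i has_real_derivative (-1)^i * (B2 i + (if i = 0 then Z2 else B2 (i-1)))) (at x)"
      if i: "i \<le> k" for i
    proof -
      have dd: "((\<lambda>x. V (k-i) x * poly (Pl (k+1+i)) x) has_real_derivative
              V (Suc (k-i)) x * poly (Pl (k+1+i)) x + poly (Pl (Suc (k+1+i))) x * V (k-i) x) (at x)"
        by (rule DERIV_mult[OF dV[of "k-i"] dPl[of "k+1+i"]]) simp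
      have eqs: "i \<noteq> 0 \<Longrightarrow> k-(i-1) = Suc (k-i)" "i \<noteq> 0 \<Longrightarrow> k+2+(i-1) = k+1+i"
        "Suc (k+1+i) = k+2+i" using i by auto
      have dd2: "(T2 i has_real_derivative (-1)^i * (V (Suc (k-i)) x * poly (Pl (k+1+i)) x + poly (Pl (k+2+i)) x * V (k-i) x)) (at x)"
        using DERIV_cmult[OF dd, of "(-1)^i"] eqs(3) by (simp add: T2_def[abs_def])
      show ?thesis
      proof (cases "i = 0")
        case True
        then show ?thesis using dd2 by (simp add: B2_def Z2_def algebra_simps)
      next
        case False
        have e: "B2 (i-1) = V (Suc (k-i)) x * poly (Pl (k+1+i)) x"
          using eqs False unfolding B2_def by simp
        have "(-1)^i * (V (Suc (k-i)) x * poly (Pl (k+1+i)) x + poly (Pl (k+2+i)) x * V (k-i) x)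
              = (-1)^i * (B2 i + (if i = 0 then Z2 else B2 (i-1)))"
          unfolding e using False by (simp add: B2_def algebra_simps)
        then show ?thesis using dd2 by simp
      qed
    qed
    have s1': "((\<lambda>x. \<Sum>i\<le>k. T1 i x) has_real_derivative
        (\<Sum>i\<le>k. (-1)^i * (B1 i + (if i = 0 then Z1 else B1 (i-1))))) (at x)"
      by (rule DERIV_sum) (rule dT1, simp)
    have s1: "((\<lambda>x. \<Sum>i\<le>k. T1 i x) has_real_derivative Z1 + (-1)^k * B1 k) (at x)"
      using s1' unfolding telescope .
    have s2': "((\<lambda>x. \<Sum>i\<le>k. T2 i x) has_real_derivative
        (\<Sum>i\<le>k. (-1)^i * (B2 i + (if i = 0 then Z2 else B2 (i-1))))) (at x)"
      by (rule DERIV_sum) (rule dT2, simp)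
    have s2: "((\<lambda>x. \<Sum>i\<le>k. T2 i x) has_real_derivative Z2 + (-1)^k * B2 k) (at x)"
      using s2' unfolding telescope .
    have kk: "k+2+k = 2*k+2" by simp
    have "B1 k = (-1)^(k+1) * \<psi> 0 x"
      unfolding B1_def V_def kk Vf_top by simp
    moreover have "B2 k = 0"
      unfolding B2_def kk Ptop by simp
    moreover have m1: "(-1::real)^k * (-1)^(k+1) = -1"
    proof -
      have "(-1::real)^k * (-1)^k = 1" by (simp add: power_mult_distrib[symmetric])
      then show ?thesis by simp
    qed
    ultimately have "Z1 + (-1)^k * B1 k + (Z2 + (-1)^k * B2 k) = V (k+1) x * g x - \<psi> 0 x"
    proof -
      assume a: "B1 k = (-1)^(k+1) * \<psi> 0 x" "B2 k = 0"
      have "(-1)^k * B1 k = - \<psi> 0 x" unfolding a mult.assoc[symmetric] m1 by simp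
      then show ?thesis using a(2) by (simp add: Z1_def Z2_def algebra_simps)
    qed
    with DERIV_add[OF s1 s2] show ?thesis unfolding K_def[abs_def] by simp
  qed
  have Kc: "K c = 0"
  proof -
    have "T1 i c = 0" if "i \<le> k" for i unfolding T1_def using psic(1)[of "k-i"] by simp
    moreover have "T2 i c = 0" if "i \<le> k" for i unfolding T2_def V_def using Vf_c[OF h0, of "k-i" k c] by simp
    ultimately show ?thesis unfolding K_def by simp
  qed
  have Kd: "K d = 0"
  proof -
    have "T1 i d = 0" if "i \<le> k" for i unfolding T1_def using psic(2)[of "k-i"] by simp
    moreover have "T2 i d = 0" if "i \<le> k" for i
      unfolding T2_def V_def using Vf_d[OF h0, of "k-i" k c] hd by simp
    ultimately show ?thesis unfolding K_def by simp
  qed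
  have I1: "((\<lambda>x. V (k+1) x * g x - \<psi> 0 x) has_integral (K d - K c)) {c..d}"
    by (rule ftc_ac[OF cdle acK S dK])
  have I2: "(\<psi> 0 has_integral (integral {c..d} (Df 0) - integral {c..d} (poly P))) {c..d}"
  proof -
    have "(Df 0 has_integral integral {c..d} (Df 0)) {c..d}"
      using integrable_continuous_interval[OF contDf[of 0]] by (simp add: integrable_integral)
    moreover have "(poly P has_integral integral {c..d} (poly P)) {c..d}"
      using integrable_continuous_interval[OF cont_poly] by (simp add: integrable_integral)
    ultimately have "((\<lambda>x. Df 0 x - poly P x) has_integral (integral {c..d} (Df 0) - integral {c..d} (poly P))) {c..d}"
      by (rule has_integral_diff)
    moreover have "\<psi> 0 = (\<lambda>x. Df 0 x - poly P x)" by (simp add: \<psi>_def fun_eq_iff Pl_def)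
    ultimately show ?thesis by simp
  qed
  have "(\<lambda>x. V (k+1) x * g x - \<psi> 0 x + \<psi> 0 x) = (\<lambda>x. Vf k c (d-c) (k+1) x * g x)"
    by (simp add: V_def h_def fun_eq_iff)
  with has_integral_add[OF I1 I2] Kc Kd show ?thesis by simp
qed

lemma combine_cells:
  fixes f :: "real \<Rightarrow> real"
  assumes h: "h > 0"
    and I: "\<And>j. j < n \<Longrightarrow> (f has_integral I j) {a + real j * h .. a + real (Suc j) * h}"
  shows "(f has_integral (\<Sum>j<n. I j)) {a .. a + real n * h}"
  using I
proof (induction n)
  case 0
  then show ?case using has_integral_refl(2)[of f a] by simp
next
  case (Suc n)
  have IH: "(f has_integral (\<Sum>j<n. I j)) {a .. a + real n * h}" using Suc by simp
  have last: "(f has_integral I n) {a + real n * h .. a + real (Suc n) * h}" using Suc.prems by simp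
  have "(f has_integral (\<Sum>j<n. I j) + I n) {a .. a + real (Suc n) * h}"
    by (rule has_integral_combine[OF _ _ IH last]) (use h in \<open>auto simp: algebra_simps\<close>)
  then show ?case by simp
qed

theorem mainTheorem8:
  fixes k N :: nat and a b :: real and phi :: "real \<Rightarrow> real"
    and Df :: "nat \<Rightarrow> real \<Rightarrow> real" and g :: "real \<Rightarrow> real"
  assumes "a < b" and "N \<ge> 1"
    and "Df 0 = phi"
    and "\<And>l x. l < k \<Longrightarrow> x \<in> {a..b} \<Longrightarrow>
           (Df l has_real_derivative Df (Suc l) x) (at x within {a..b})"
    and "continuous_on {a..b} (Df k)"
    and "abs_cont_on a b (Df k)"
    and "AE x in lborel. x \<in> {a<..<b} \<longrightarrow> (Df k has_real_derivative g x) (at x)"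
  shows "integral {a..b} (hermite_pw k a b N Df) =
           integral {a..b} phi
           - ((b - a) / real N) ^ (k+1) *
             integral {a..b} (\<lambda>x. E k ((x - a) / ((b - a) / real N)) * g x)"
proof -
  note ab = assms(1) and N1 = assms(2) and D0 = assms(3) and Dab = assms(4)
    and contk = assms(5) and ack = assms(6) and AEg = assms(7)
  define h where "h = (b - a) / real N"
  have h: "h > 0" using ab N1 by (simp add: h_def)
  have bN: "a + real N * h = b" using N1 by (simp add: h_def)
  obtain S where S: "negligible S" and Sd: "\<And>x. x \<in> {a<..<b} \<Longrightarrow> x \<notin> S \<Longrightarrow> (Df k has_real_derivative g x) (at x)"
  proof -
    from AEg obtain S where S1: "{x \<in> space lborel. \<not> (x \<in> {a<..<b} \<longrightarrow> (Df k has_real_derivative g x) (at x))} \<subseteq> S"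
      and S2: "emeasure lborel S = 0" "S \<in> sets lborel" by (rule AE_E)
    have "S \<in> null_sets lborel" using S2 by (simp add: null_sets_def)
    then have "negligible S" using negligible_iff_null_sets null_sets_completionI by blast
    moreover have "\<And>x. x \<in> {a<..<b} \<Longrightarrow> x \<notin> S \<Longrightarrow> (Df k has_real_derivative g x) (at x)"
      using S1 by auto
    ultimately show ?thesis by (rule that)
  qed
  have contDf0: "continuous_on {a..b} (Df 0)"
  proof (cases "k = 0")
    case True then show ?thesis using contk by simp
  next
    case False
    show ?thesis by (rule DERIV_continuous_on[of _ _ "Df (Suc 0)"]) (rule Dab, use False in auto)
  qed
  define c where "c j = a + real j * h" for j
  define d where "d j = a + real (Suc j) * h" for j
  define P where "P j = hermite_cell k Df (c j) (d j)" for j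
  have cdj: "c j < d j" "d j - c j = h" "a \<le> c j" for j
    using h by (auto simp: c_def d_def algebra_simps)
  have djb: "d j \<le> b" if "j < N" for j
  proof -
    have "real (Suc j) * h \<le> real N * h" using that h by (intro mult_right_mono) auto
    then show ?thesis using bN by (simp add: d_def)
  qed
  have Pj: "degree (P j) \<le> 2*k+1 \<and> (\<forall>l\<le>k. poly ((pderiv ^^ l) (P j)) (c j) = Df l (c j) \<and>
              poly ((pderiv ^^ l) (P j)) (d j) = Df l (d j))" for j
    unfolding P_def by (rule hermite_cell_props) (use cdj(1)[of j] in simp)
  have cellidx: "\<lfloor>(x - a) / h\<rfloor> = int j" if "x \<in> {c j..<d j}" for x j
  proof -
    have "real j \<le> (x - a) / h" "(x - a) / h < real j + 1"
      using that h by (auto simp: c_def d_def field_simps)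
    then show ?thesis by (simp add: floor_eq_iff)
  qed
  have hpw: "hermite_pw k a b N Df x = poly (P j) x" if "x \<in> {c j..<d j}" "j < N" for x j
  proof -
    have "cell_index a b N x = j" unfolding cell_index_def h_def[symmetric]
      using cellidx[OF that(1)] that(2) by simp
    then show ?thesis unfolding hermite_pw_def h_def[symmetric] by (simp add: P_def c_def d_def)
  qed
  have Eeq: "Vf k (c j) h (k+1) x * g x = h^(k+1) * (E k ((x - a) / h) * g x)" if "x \<in> {c j..<d j}" for x j
  proof -
    have "frac ((x - a) / h) = (x - c j) / h"
      using cellidx[OF that] h by (simp add: frac_def c_def field_simps)
    then show ?thesis using Vf_mu[of k "c j" h x] by (simp add: E_def)
  qed
  define IP where "IP j = integral {c j..d j} (poly (P j))" for j
  define IF where "IF j = integral {c j..d j} phi" for j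
  have cellP: "(hermite_pw k a b N Df has_integral IP j) {c j..d j}" if "j < N" for j
  proof -
    have i1: "(poly (P j) has_integral IP j) {c j..d j}"
      unfolding IP_def using integrable_continuous_interval[OF cont_poly] by (simp add: integrable_integral)
    show ?thesis
      by (rule has_integral_spike[OF negligible_sing[of "d j"] _ i1]) (use hpw[OF _ that] in auto)
  qed
  have cellF: "(phi has_integral IF j) {c j..d j}" if "j < N" for j
  proof -
    have "continuous_on {c j..d j} phi" using contDf0 D0 cdj(3)[of j] djb[OF that]
      by (auto intro: continuous_on_subset)
    then show ?thesis unfolding IF_def by (intro integrable_integral integrable_continuous_interval)
  qed
  have cellE: "((\<lambda>x. E k ((x - a) / h) * g x) has_integral (IF j - IP j) / h^(k+1)) {c j..d j}" if "j < N" for j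
  proof -
    have sub: "{c j..d j} \<subseteq> {a..b}" using cdj(3)[of j] djb[OF that] by auto
    have "((\<lambda>x. Vf k (c j) (d j - c j) (k+1) x * g x) has_integral
           (integral {c j..d j} (Df 0) - integral {c j..d j} (poly (P j)))) {c j..d j}"
    proof (rule cell[of "c j" "d j" k Df S g "P j"])
      show "c j < d j" by (rule cdj(1))
      show "\<And>l x. l < k \<Longrightarrow> x \<in> {c j..d j} \<Longrightarrow> (Df l has_real_derivative Df (Suc l) x) (at x within {c j..d j})"
        using Dab sub by (meson has_field_derivative_subset subsetD)
      show "continuous_on {c j..d j} (Df k)" using contk sub by (rule continuous_on_subset)
      show "abs_cont_on (c j) (d j) (Df k)" using ack cdj(3)[of j] djb[OF that] by (rule ac_sub)
      show "negligible S" by (rule S)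
      show "\<And>x. x \<in> {c j<..<d j} \<Longrightarrow> x \<notin> S \<Longrightarrow> (Df k has_real_derivative g x) (at x)"
        using Sd sub by auto
      show "degree (P j) \<le> 2*k+1" using Pj by blast
      show "\<And>l. l \<le> k \<Longrightarrow> poly ((pderiv^^l) (P j)) (c j) = Df l (c j) \<and> poly ((pderiv^^l) (P j)) (d j) = Df l (d j)"
        using Pj by blast
    qed
    then have "((\<lambda>x. Vf k (c j) h (k+1) x * g x) has_integral (IF j - IP j)) {c j..d j}"
      using cdj(2)[of j] by (simp add: IF_def IP_def D0)
    then have i2: "((\<lambda>x. Vf k (c j) h (k+1) x * g x) has_integral (IF j - IP j)) {c j..d j}" .
    have "((\<lambda>x. h^(k+1) * (E k ((x - a) / h) * g x)) has_integral (IF j - IP j)) {c j..d j}"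
    proof (rule has_integral_spike[OF negligible_sing[of "d j"] _ i2])
      fix x assume "x \<in> {c j..d j} - {d j}"
      then have "x \<in> {c j..<d j}" by auto
      from Eeq[OF this] show "h^(k+1) * (E k ((x - a) / h) * g x) = Vf k (c j) h (k+1) x * g x" by (rule sym)
    qed
    from has_integral_cmul[OF this, of "1 / h^(k+1)"] show ?thesis using h by simp
  qed
  have totP: "(hermite_pw k a b N Df has_integral (\<Sum>j<N. IP j)) {a..b}"
    using combine_cells[OF h, of N "hermite_pw k a b N Df" IP a] cellP bN by (simp add: c_def d_def)
  have totF: "(phi has_integral (\<Sum>j<N. IF j)) {a..b}"
    using combine_cells[OF h, of N phi IF a] cellF bN by (simp add: c_def d_def)
  have totE: "((\<lambda>x. E k ((x - a) / h) * g x) has_integral (\<Sum>j<N. (IF j - IP j) / h^(k+1))) {a..b}"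
    using combine_cells[OF h, of N _ "\<lambda>j. (IF j - IP j) / h^(k+1)" a] cellE bN by (simp add: c_def d_def)
  have "(\<Sum>j<N. IP j) = (\<Sum>j<N. IF j) - h^(k+1) * (\<Sum>j<N. (IF j - IP j) / h^(k+1))"
    using h by (simp add: sum_divide_distrib[symmetric] sum_subtractf)
  then show ?thesis
    using integral_unique[OF totP] integral_unique[OF totF] integral_unique[OF totE]
    by (simp add: h_def)
qed

end
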